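(* Let $k\ge 1$ and $n$ be integers with $2k\le n\le 2k+2$ (equivalently, $\mathrm{SG}(n,k)$ is $t$-chromatic with $t=n-2k+2\le 4$). Then $\mathrm{SG}(n,k)$ admits an orientation in which every shortest odd cycle of $\mathrm{SG}(n,k)$ is alternating (vacuously if it has no odd cycle).
   Context: The Kneser graph $\mathrm{KG}(n,k)$ ($n\ge 2k$) has as vertices all $k$-element subsets of $[n]=\{1,\dots,n\}$, two being adjacent iff disjoint. The Schrijver graph $\mathrm{SG}(n,k)$ is the induced subgraph of $\mathrm{KG}(n,k)$ on the stable $k$-subsets, i.e., those $A$ containing no pair $\{i,i+1\}$ for $i\in[n-1]$ and not containing both $1$ and $n$; its chromatic number is $n-2k+2$. An orientation assigns each edge exactly one direction. In an oriented graph, a subgraph that is a cycle is called alternating if at most one of its vertices has both positive in-degree and positive out-degree within that cycle. *)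

theory Defs
  imports Main
begin

definition stable_subset :: "nat \<Rightarrow> nat set \<Rightarrow> bool" where
  "stable_subset n A \<longleftrightarrow>
     (\<forall>i. 1 \<le> i \<and> i < n \<longrightarrow> \<not> (i \<in> A \<and> Suc i \<in> A)) \<and> \<not> (1 \<in> A \<and> n \<in> A)"

definition SG_vertices :: "nat \<Rightarrow> nat \<Rightarrow> nat set set" where
  "SG_vertices n k = {A. A \<subseteq> {1..n} \<and> card A = k \<and> stable_subset n A}"

definition SG_adj :: "nat \<Rightarrow> nat \<Rightarrow> nat set \<Rightarrow> nat set \<Rightarrow> bool" where
  "SG_adj n k A B \<longleftrightarrow> A \<in> SG_vertices n k \<and> B \<in> SG_vertices n k \<and> A \<inter> B = {}"

definition is_cycle :: "('a \<Rightarrow> 'a \<Rightarrow> bool) \<Rightarrow> 'a list \<Rightarrow> bool" where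
  "is_cycle E cs \<longleftrightarrow> 3 \<le> length cs \<and> distinct cs \<and>
     (\<forall>i < length cs. E (cs ! i) (cs ! ((i + 1) mod length cs)))"

definition shortest_odd_cycle :: "('a \<Rightarrow> 'a \<Rightarrow> bool) \<Rightarrow> 'a list \<Rightarrow> bool" where
  "shortest_odd_cycle E cs \<longleftrightarrow> is_cycle E cs \<and> odd (length cs) \<and>
     (\<forall>cs'. is_cycle E cs' \<and> odd (length cs') \<longrightarrow> length cs \<le> length cs')"

definition is_orientation :: "('a \<Rightarrow> 'a \<Rightarrow> bool) \<Rightarrow> ('a \<Rightarrow> 'a \<Rightarrow> bool) \<Rightarrow> bool" where
  "is_orientation E D \<longleftrightarrow> (\<forall>x y. D x y \<longrightarrow> E x y) \<and>
     (\<forall>x y. E x y \<longrightarrow> D x y \<or> D y x) \<and> (\<forall>x y. D x y \<longrightarrow> \<not> D y x)"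

definition cycle_in_out :: "('a \<Rightarrow> 'a \<Rightarrow> bool) \<Rightarrow> 'a list \<Rightarrow> nat \<Rightarrow> bool" where
  "cycle_in_out D cs i \<longleftrightarrow>
     (let m = length cs; v = cs ! i; p = cs ! ((i + m - 1) mod m); s = cs ! ((i + 1) mod m)
      in (D p v \<or> D s v) \<and> (D v p \<or> D v s))"

definition alternating :: "('a \<Rightarrow> 'a \<Rightarrow> bool) \<Rightarrow> 'a list \<Rightarrow> bool" where
  "alternating D cs \<longleftrightarrow> card {i. i < length cs \<and> cycle_in_out D cs i} \<le> 1"

end

theory Submission
  imports Defs
begin


definition rk :: "nat set \<Rightarrow> nat" where
  "rk A = (if 1 \<in> A then 0 else if 3 \<in> A then 1 else if 2 \<in> A then 2 else 3)"

definition Dor :: "nat \<Rightarrow> nat \<Rightarrow> nat set \<Rightarrow> nat set \<Rightarrow> bool" where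
  "Dor n k A B \<longleftrightarrow> SG_adj n k A B \<and> (rk A < rk B \<or> (rk A = rk B \<and> Min A < Min B))"

lemma adj_sym: "SG_adj n k A B \<Longrightarrow> SG_adj n k B A"
  unfolding SG_adj_def by auto

lemma vert_props:
  assumes "A \<in> SG_vertices n k" "1 \<le> k"
  shows "finite A" "A \<noteq> {}" "A \<subseteq> {1..n}" "stable_subset n A" "card A = k"
  using assms unfolding SG_vertices_def by (auto intro: finite_subset)

lemma adj_props:
  assumes "SG_adj n k A B" "1 \<le> k"
  shows "finite A" "A \<noteq> {}" "A \<subseteq> {1..n}" "stable_subset n A" "A \<inter> B = {}"
    "finite B" "B \<noteq> {}" "B \<subseteq> {1..n}" "stable_subset n B"
proof -
  have a: "A \<in> SG_vertices n k" and b: "B \<in> SG_vertices n k" and c: "A \<inter> B = {}"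
    using assms(1) unfolding SG_adj_def by auto
  show "finite A" "A \<noteq> {}" "A \<subseteq> {1..n}" "stable_subset n A" "A \<inter> B = {}"
    "finite B" "B \<noteq> {}" "B \<subseteq> {1..n}" "stable_subset n B"
    using vert_props[OF a assms(2)] vert_props[OF b assms(2)] c by auto
qed

lemma orient: "1 \<le> k \<Longrightarrow> is_orientation (SG_adj n k) (Dor n k)"
  unfolding is_orientation_def
proof (intro conjI allI impI)
  fix x y assume "Dor n k x y" thus "SG_adj n k x y" by (simp add: Dor_def)
next
  fix x y assume "Dor n k x y" thus "\<not> Dor n k y x" by (auto simp: Dor_def)
next
  fix x y assume k: "1 \<le> k" and a: "SG_adj n k x y"
  have "Min x \<in> x" "Min y \<in> y" using adj_props[OF a k] by auto
  hence "Min x \<noteq> Min y" using adj_props(5)[OF a k] by auto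
  thus "Dor n k x y \<or> Dor n k y x" using a adj_sym[OF a] unfolding Dor_def by auto
qed

lemma stab12: "stable_subset n X \<Longrightarrow> 2 \<le> n \<Longrightarrow> 1 \<in> X \<Longrightarrow> 2 \<notin> X"
  unfolding stable_subset_def
proof -
  assume "(\<forall>i. 1 \<le> i \<and> i < n \<longrightarrow> \<not> (i \<in> X \<and> Suc i \<in> X)) \<and> \<not> (1 \<in> X \<and> n \<in> X)" "2 \<le> n" "1 \<in> X"
  then show "2 \<notin> X" by (metis Suc_1 Suc_le_lessD order_refl)
qed

lemma stab32: "stable_subset n X \<Longrightarrow> 3 \<le> n \<Longrightarrow> 3 \<in> X \<Longrightarrow> 2 \<notin> X"
  unfolding stable_subset_def
proof -
  assume a: "(\<forall>i. 1 \<le> i \<and> i < n \<longrightarrow> \<not> (i \<in> X \<and> Suc i \<in> X)) \<and> \<not> (1 \<in> X \<and> n \<in> X)" "3 \<le> n" "3 \<in> X"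
  have "1 \<le> (2::nat) \<and> 2 < n" using a(2) by simp
  then have "\<not> (2 \<in> X \<and> Suc 2 \<in> X)" using a(1) by blast
  then show "2 \<notin> X" using a(3) by (simp add: numeral_3_eq_3)
qed

lemma rk0: "rk U = 0 \<longleftrightarrow> 1 \<in> U" by (simp add: rk_def)
lemma rk1: "rk U = 1 \<longleftrightarrow> 1 \<notin> U \<and> 3 \<in> U" by (simp add: rk_def)
lemma rk2: "rk U = 2 \<longleftrightarrow> 1 \<notin> U \<and> 3 \<notin> U \<and> 2 \<in> U" by (simp add: rk_def)
lemma rk3: "rk U = 3 \<longleftrightarrow> 1 \<notin> U \<and> 3 \<notin> U \<and> 2 \<notin> U" by (simp add: rk_def)
lemma rk_le: "rk U \<le> 3" by (simp add: rk_def)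

lemma rk_same: assumes "U \<inter> V = {}" "rk U = rk V" shows "rk U = 3"
proof -
  have "rk U = 0 \<or> rk U = 1 \<or> rk U = 2 \<or> rk U = 3" using rk_le[of U] by linarith
  moreover have "rk U \<noteq> 0" using rk0[of U] rk0[of V] assms by auto
  moreover have "rk U \<noteq> 1" using rk1[of U] rk1[of V] assms by auto
  moreover have "rk U \<noteq> 2" using rk2[of U] rk2[of V] assms by auto
  ultimately show ?thesis by blast
qed

lemma Dor_step:
  assumes xy: "Dor n k X Y" and yz: "Dor n k Y Z" and n: "3 \<le> n" and k: "1 \<le> k"
  shows "1 \<notin> Y" "1 \<notin> Z" "rk Y \<noteq> 0"
    "rk Y = 1 \<Longrightarrow> 2 \<notin> X \<and> 2 \<notin> Y \<and> rk X = 0"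
    "rk Y = 3 \<Longrightarrow> 2 \<notin> Y \<and> 2 \<notin> Z \<and> rk Z = 3"
    "rk Y = 2 \<Longrightarrow> 3 \<notin> Y \<and> 3 \<notin> Z"
proof -
  have axy: "SG_adj n k X Y" and ayz: "SG_adj n k Y Z" using xy yz by (auto simp: Dor_def)
  note P1 = adj_props[OF axy k] and P2 = adj_props[OF ayz k]
  have r1: "rk X < rk Y \<or> (rk X = rk Y \<and> Min X < Min Y)" and r2: "rk Y < rk Z \<or> (rk Y = rk Z \<and> Min Y < Min Z)"
    using xy yz by (auto simp: Dor_def)
  have same: "\<And>U V. U \<inter> V = {} \<Longrightarrow> rk U = rk V \<Longrightarrow> rk U = 3"
    using rk_same by blast
  have sXY: "rk X = rk Y \<Longrightarrow> rk X = 3" using same P1(5) by blast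
  have sYZ: "rk Y = rk Z \<Longrightarrow> rk Y = 3" using same P2(5) by blast
  show "rk Y \<noteq> 0" using r1 sXY by auto
  thus "1 \<notin> Y" using rk0 by auto
  show "1 \<notin> Z"
  proof
    assume "1 \<in> Z" then have "rk Z = 0" using rk0 by auto
    then show False using r2 sYZ \<open>rk Y \<noteq> 0\<close> by auto
  qed
  show "rk Y = 1 \<Longrightarrow> 2 \<notin> X \<and> 2 \<notin> Y \<and> rk X = 0"
  proof -
    assume h: "rk Y = 1"
    hence "rk X = 0" using r1 sXY by auto
    hence "1 \<in> X" using rk0 by auto
    moreover have "3 \<in> Y" using h rk1 by auto
    moreover have "2 \<le> n" using n by simp
    ultimately show ?thesis using stab12[OF P1(4)] stab32[OF P2(4) n] \<open>rk X = 0\<close> by blast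
  qed
  show "rk Y = 3 \<Longrightarrow> 2 \<notin> Y \<and> 2 \<notin> Z \<and> rk Z = 3"
  proof -
    assume h: "rk Y = 3"
    have "rk Z \<le> 3" by (rule rk_le)
    hence "rk Z = 3" using r2 h by auto
    thus ?thesis using h rk3 rk2 by auto
  qed
  show "rk Y = 2 \<Longrightarrow> 3 \<notin> Y \<and> 3 \<notin> Z"
  proof -
    assume h: "rk Y = 2"
    have "rk Z \<le> 3" by (rule rk_le)
    hence "rk Z = 3" using r2 h sYZ by auto
    thus ?thesis using h rk3 rk2 by auto
  qed
qed



definition incnt :: "nat set list \<Rightarrow> nat \<Rightarrow> nat" where
  "incnt cs x = (\<Sum>i<length cs. of_bool (x \<in> cs!i))"

definition miss :: "nat set list \<Rightarrow> nat \<Rightarrow> nat" where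
  "miss cs x = (\<Sum>i<length cs. of_bool (x \<notin> cs!i \<and> x \<notin> cs!((i+1) mod length cs)))"

lemma nxt_bij: "0 < (L::nat) \<Longrightarrow> bij_betw (\<lambda>i. (i+1) mod L) {..<L} {..<L}"
proof -
  assume L: "0 < L"
  have inj: "inj_on (\<lambda>i. (i+1) mod L) {..<L}"
  proof (rule inj_onI)
    fix i j assume "i \<in> {..<L}" "j \<in> {..<L}" "(i+1) mod L = (j+1) mod L"
    moreover have e: "\<And>m. m \<le> L \<Longrightarrow> m mod L = (if m = L then 0 else m)" by auto
    ultimately show "i = j" using e[of "i+1"] e[of "j+1"] by (auto split: if_splits)
  qed
  have sub: "(\<lambda>i. (i+1) mod L) ` {..<L} \<subseteq> {..<L}" using L by auto
  have "(\<lambda>i. (i+1) mod L) ` {..<L} = {..<L}"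
    by (rule endo_inj_surj[OF _ sub inj]) simp
  then show ?thesis using inj unfolding bij_betw_def by simp
qed

lemma cyc_adj:
  assumes "is_cycle E cs" "i < length cs"
  shows "E (cs!i) (cs!((i+1) mod length cs))"
  using assms unfolding is_cycle_def by auto

lemma incnt_miss:
  assumes cyc: "is_cycle (SG_adj n k) cs" and k: "1 \<le> k"
  shows "2 * incnt cs x + miss cs x = length cs"
proof -
  define L where "L = length cs"
  have L: "0 < L" using cyc unfolding is_cycle_def L_def by auto
  have re: "(\<Sum>i<L. of_bool (x \<in> cs!((i+1) mod L))) = (\<Sum>i<L. (of_bool (x \<in> cs!i)::nat))"
    using sum.reindex_bij_betw[OF nxt_bij[OF L], of "\<lambda>i. (of_bool (x \<in> cs!i)::nat)"] by simp
  have pt: "\<And>i. i < L \<Longrightarrow> (of_bool (x \<in> cs!i) + of_bool (x \<in> cs!((i+1) mod L))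
      + of_bool (x \<notin> cs!i \<and> x \<notin> cs!((i+1) mod L)) :: nat) = 1"
  proof -
    fix i assume i: "i < L"
    have "cs!i \<inter> cs!((i+1) mod L) = {}"
      using adj_props(5)[OF cyc_adj[OF cyc] k] i L_def by auto
    then show "(of_bool (x \<in> cs!i) + of_bool (x \<in> cs!((i+1) mod L))
      + of_bool (x \<notin> cs!i \<and> x \<notin> cs!((i+1) mod L)) :: nat) = 1" by auto
  qed
  have "(\<Sum>i<L. (of_bool (x \<in> cs!i) + of_bool (x \<in> cs!((i+1) mod L))
      + of_bool (x \<notin> cs!i \<and> x \<notin> cs!((i+1) mod L)) :: nat)) = (\<Sum>i<L. 1)"
    using pt by (rule sum.cong[OF refl]) simp
  then have "(\<Sum>i<L. (of_bool (x \<in> cs!i)::nat)) + (\<Sum>i<L. of_bool (x \<in> cs!((i+1) mod L)))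
      + (\<Sum>i<L. of_bool (x \<notin> cs!i \<and> x \<notin> cs!((i+1) mod L))) = L"
    by (simp add: sum.distrib)
  then show ?thesis using re unfolding incnt_def miss_def L_def[symmetric] by simp
qed

lemma sum_incnt:
  assumes cyc: "is_cycle (SG_adj n k) cs" and k: "1 \<le> k"
  shows "(\<Sum>x\<in>{1..n}. incnt cs x) = length cs * k"
proof -
  define L where "L = length cs"
  have "(\<Sum>x\<in>{1..n}. incnt cs x) = (\<Sum>x\<in>{1..n}. \<Sum>i<L. (of_bool (x \<in> cs!i)::nat))"
    unfolding incnt_def L_def by simp
  also have "\<dots> = (\<Sum>i<L. \<Sum>x\<in>{1..n}. (of_bool (x \<in> cs!i)::nat))"
    by (rule sum.swap)
  also have "\<dots> = (\<Sum>i<L. k)"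
  proof (rule sum.cong[OF refl])
    fix i assume "i \<in> {..<L}"
    then have i: "i < L" by simp
    have a: "SG_adj n k (cs!i) (cs!((i+1) mod L))" using cyc_adj[OF cyc] i L_def by auto
    have sub: "cs!i \<subseteq> {1..n}" using adj_props(3)[OF a k] .
    have c: "card (cs!i) = k" using a unfolding SG_adj_def SG_vertices_def by auto
    have "(\<Sum>x\<in>{1..n}. (of_bool (x \<in> cs!i)::nat)) = card ({1..n} \<inter> {x. x \<in> cs!i})"
      by simp
    also have "{1..n} \<inter> {x. x \<in> cs!i} = cs!i" using sub by auto
    finally show "(\<Sum>x\<in>{1..n}. (of_bool (x \<in> cs!i)::nat)) = k" using c by simp
  qed
  also have "\<dots> = L * k" by simp
  finally show ?thesis unfolding L_def .
qed

lemma sum_miss: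
  assumes cyc: "is_cycle (SG_adj n k) cs" and k: "1 \<le> k"
  shows "(\<Sum>x\<in>{1..n}. miss cs x) + 2 * (length cs * k) = n * length cs"
proof -
  have "(\<Sum>x\<in>{1..n}. 2 * incnt cs x + miss cs x) = (\<Sum>x\<in>{1..n}. length cs)"
    using incnt_miss[OF cyc k] by simp
  then have "2 * (\<Sum>x\<in>{1..n}. incnt cs x) + (\<Sum>x\<in>{1..n}. miss cs x) = n * length cs"
    by (simp add: sum.distrib sum_distrib_left)
  then show ?thesis using sum_incnt[OF cyc k] by simp
qed

lemma miss_odd:
  assumes cyc: "is_cycle (SG_adj n k) cs" and k: "1 \<le> k" and o: "odd (length cs)"
  shows "odd (miss cs x)"
  using incnt_miss[OF cyc k, of x] o by (metis even_add even_mult_iff odd_two_times_div_two_nat dvd_triv_left)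



lemma nx_eq: "i < (L::nat) \<Longrightarrow> (i+1) mod L = (if i+1 = L then 0 else i+1)"
  by auto

lemma pv_eq: "i < (L::nat) \<Longrightarrow> (i+L-1) mod L = (if i = 0 then L-1 else i-1)"
proof -
  assume i: "i < L"
  show ?thesis
  proof (cases "i = 0")
    case True then show ?thesis using i by simp
  next
    case False
    then have "i + L - 1 = (i - 1) + L" by simp
    then have "(i+L-1) mod L = (i-1) mod L" by simp
    then show ?thesis using False i by simp
  qed
qed

lemma card_Ed:
  fixes L :: nat and P :: "nat \<Rightarrow> bool"
  assumes L: "3 \<le> L"
  shows "card ((\<lambda>j. {j, (j+1) mod L}) ` {j. j < L \<and> P j}) = (\<Sum>j<L. of_bool (P j))"
proof -
  have "inj_on (\<lambda>j. {j, (j+1) mod L}) {j. j < L \<and> P j}"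
  proof (rule inj_onI)
    fix a b assume a: "a \<in> {j. j < L \<and> P j}" and b: "b \<in> {j. j < L \<and> P j}"
      and e: "{a, (a+1) mod L} = {b, (b+1) mod L}"
    show "a = b"
    proof (rule ccontr)
      assume ne: "a \<noteq> b"
      have "a \<in> {a, (a+1) mod L}" by simp
      then have "a \<in> {b, (b+1) mod L}" unfolding e .
      then have ab: "a = (b+1) mod L" using ne by simp
      have "b \<in> {b, (b+1) mod L}" by simp
      then have "b \<in> {a, (a+1) mod L}" unfolding e[symmetric] .
      then have ba: "b = (a+1) mod L" using ne by simp
      have al: "a < L" and bl: "b < L" using a b by auto
      have "(b+1 = L \<longrightarrow> a = 0) \<and> (b+1 \<noteq> L \<longrightarrow> a = b+1)" using ab nx_eq[OF bl] by presburger
      moreover have "(a+1 = L \<longrightarrow> b = 0) \<and> (a+1 \<noteq> L \<longrightarrow> b = a+1)" using ba nx_eq[OF al] by presburger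
      ultimately show False using L by presburger
    qed
  qed
  then have "card ((\<lambda>j. {j, (j+1) mod L}) ` {j. j < L \<and> P j}) = card {j. j < L \<and> P j}"
    by (rule card_image)
  also have "\<dots> = card ({..<L} \<inter> {j. P j})" by (rule arg_cong[where f=card]) auto
  also have "\<dots> = (\<Sum>j<L. of_bool (P j))" by simp
  finally show ?thesis .
qed

lemma miss_card:
  assumes "3 \<le> length cs"
  shows "miss cs x = card ((\<lambda>j. {j, (j+1) mod length cs}) `
     {j. j < length cs \<and> x \<notin> cs!j \<and> x \<notin> cs!((j+1) mod length cs)})"
  unfolding miss_def using card_Ed[OF assms] by simp

lemma in_Ed:
  fixes L :: nat
  assumes L: "3 \<le> L" and i: "i < L" and t: "t = (i+1) mod L \<or> t = (i+L-1) mod L"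
    and h: "x \<notin> A i" "x \<notin> A t"
  shows "{i, t} \<in> (\<lambda>j. {j, (j+1) mod L}) ` {j. j < L \<and> x \<notin> A j \<and> x \<notin> A ((j+1) mod L)}"
  using t
proof
  assume "t = (i+1) mod L"
  then show ?thesis using i h by blast
next
  assume t2: "t = (i+L-1) mod L"
  have tl: "t < L" using t2 L by simp
  have t3: "t = (if i = 0 then L-1 else i-1)" using t2 pv_eq[OF i] by simp
  have "(t+1) mod L = (if t+1 = L then 0 else t+1)" using nx_eq[OF tl] .
  then have ti: "(t+1) mod L = i" using t3 i L by (simp split: if_splits)
  then have "{i, t} = {t, (t+1) mod L}" by auto
  moreover have "t \<in> {j. j < L \<and> x \<notin> A j \<and> x \<notin> A ((j+1) mod L)}" using tl h ti by simp
  ultimately show ?thesis by blast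
qed

lemma pair_inj: "{i, a} = {j, b} \<Longrightarrow> i \<noteq> j \<Longrightarrow> j = a \<and> i = b"
  by (auto simp: doubleton_eq_iff)

lemma inout_bounds:
  fixes n k :: nat and cs :: "nat set list"
  assumes cyc: "is_cycle (SG_adj n k) cs" and k: "1 \<le> k" and n: "3 \<le> n"
  defines "S \<equiv> {i. i < length cs \<and> cycle_in_out (Dor n k) cs i}"
  shows "card S \<le> miss cs 1" "card S \<le> miss cs 2 + miss cs 3" "odd (length cs) \<Longrightarrow> odd (card S)"
proof -
  define L where "L = length cs"
  have L3: "3 \<le> L" using cyc unfolding is_cycle_def L_def by simp
  define nx where "nx i = (i+1) mod L" for i
  define pv where "pv i = (i+L-1) mod L" for i
  have nxl: "\<And>i. i < L \<Longrightarrow> nx i < L" unfolding nx_def using L3 by simp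
  have pvl: "\<And>i. i < L \<Longrightarrow> pv i < L" unfolding pv_def using L3 by simp
  have nxe: "\<And>i. i < L \<Longrightarrow> nx i = (if i+1 = L then 0 else i+1)" unfolding nx_def by (rule nx_eq)
  have pve: "\<And>i. i < L \<Longrightarrow> pv i = (if i = 0 then L-1 else i-1)" unfolding pv_def by (rule pv_eq)
  have nxpv: "\<And>i. i < L \<Longrightarrow> nx (pv i) = i"
  proof -
    fix i assume i: "i < L"
    have "pv i = (if i = 0 then L-1 else i-1)" using pve[OF i] .
    moreover have "nx (pv i) = (if pv i + 1 = L then 0 else pv i + 1)" using nxe[OF pvl[OF i]] .
    ultimately show "nx (pv i) = i" using i L3 by (cases "i = 0") simp_all
  qed
  have pvnx: "\<And>i. i < L \<Longrightarrow> pv (nx i) = i"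
  proof -
    fix i assume i: "i < L"
    have "nx i = (if i+1 = L then 0 else i+1)" using nxe[OF i] .
    moreover have "pv (nx i) = (if nx i = 0 then L-1 else nx i - 1)" using pve[OF nxl[OF i]] .
    ultimately show "pv (nx i) = i" using i L3 by (cases "i+1 = L") simp_all
  qed
  have nxne: "\<And>i. i < L \<Longrightarrow> nx i \<noteq> i"
  proof -
    fix i assume i: "i < L"
    have "nx i = (if i+1 = L then 0 else i+1)" using nxe[OF i] .
    then show "nx i \<noteq> i" using i L3 by (cases "i+1 = L") simp_all
  qed
  have pvne: "\<And>i. i < L \<Longrightarrow> pv i \<noteq> i"
  proof -
    fix i assume i: "i < L"
    have "pv i = (if i = 0 then L-1 else i-1)" using pve[OF i] .
    then show "pv i \<noteq> i" using i L3 by (cases "i = 0") simp_all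
  qed
  have adjn: "\<And>i. i < L \<Longrightarrow> SG_adj n k (cs!i) (cs!(nx i))"
    unfolding nx_def L_def using cyc_adj[OF cyc] by simp
  have adjp: "\<And>i. i < L \<Longrightarrow> SG_adj n k (cs!(pv i)) (cs!i)"
    using adjn[OF pvl] nxpv by metis
  have ori: "is_orientation (SG_adj n k) (Dor n k)" using orient[OF k] .
  have tot: "\<And>X Y. SG_adj n k X Y \<Longrightarrow> Dor n k X Y \<or> Dor n k Y X"
    using ori unfolding is_orientation_def by blast
  have asym: "\<And>X Y. Dor n k X Y \<Longrightarrow> \<not> Dor n k Y X"
    using ori unfolding is_orientation_def by blast
  have io: "\<And>i. i < L \<Longrightarrow> cycle_in_out (Dor n k) cs i \<longleftrightarrow>
     (Dor n k (cs!(pv i)) (cs!i) \<or> Dor n k (cs!(nx i)) (cs!i)) \<and>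
     (Dor n k (cs!i) (cs!(pv i)) \<or> Dor n k (cs!i) (cs!(nx i)))"
    unfolding cycle_in_out_def Let_def nx_def pv_def L_def by simp
  define ou where "ou i = (if Dor n k (cs!i) (cs!(nx i)) then nx i else pv i)" for i
  define ii where "ii i = (if Dor n k (cs!i) (cs!(nx i)) then pv i else nx i)" for i
  have SL: "\<And>i. i \<in> S \<Longrightarrow> i < L" unfolding S_def L_def by simp
  have dirs: "\<And>i. i \<in> S \<Longrightarrow> Dor n k (cs!(ii i)) (cs!i) \<and> Dor n k (cs!i) (cs!(ou i))"
  proof -
    fix i assume iS: "i \<in> S"
    then have i: "i < L" by (rule SL)
    have c: "(Dor n k (cs!(pv i)) (cs!i) \<or> Dor n k (cs!(nx i)) (cs!i)) \<and>
     (Dor n k (cs!i) (cs!(pv i)) \<or> Dor n k (cs!i) (cs!(nx i)))"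
      using iS io[OF i] unfolding S_def by simp
    show "Dor n k (cs!(ii i)) (cs!i) \<and> Dor n k (cs!i) (cs!(ou i))"
    proof (cases "Dor n k (cs!i) (cs!(nx i))")
      case True
      then have "\<not> Dor n k (cs!(nx i)) (cs!i)" using asym by blast
      then show ?thesis using True c unfolding ou_def ii_def by simp
    next
      case False
      then have d: "Dor n k (cs!i) (cs!(pv i))" using c by blast
      then have "\<not> Dor n k (cs!(pv i)) (cs!i)" using asym by blast
      then show ?thesis using False c d unfolding ou_def ii_def by simp
    qed
  qed
  have oul: "\<And>i. i < L \<Longrightarrow> ou i < L \<and> ou i \<noteq> i \<and> (ou i = nx i \<or> ou i = pv i)"
    unfolding ou_def using nxl pvl nxne pvne by simp
  have iil: "\<And>i. i < L \<Longrightarrow> ii i < L \<and> ii i \<noteq> i \<and> (ii i = nx i \<or> ii i = pv i)"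
    unfolding ii_def using nxl pvl nxne pvne by simp
  note stp = Dor_step[OF conjunct1[OF dirs] conjunct2[OF dirs] n k]
  define Ed where "Ed x = (\<lambda>j. {j, nx j}) ` {j. j < L \<and> x \<notin> cs!j \<and> x \<notin> cs!(nx j)}" for x
  have cardEd: "\<And>x. miss cs x = card (Ed x)"
    unfolding Ed_def nx_def L_def using miss_card L3 L_def by simp
  have finEd: "\<And>x. finite (Ed x)" unfolding Ed_def by simp
  have inEd: "\<And>i t x. i < L \<Longrightarrow> t = nx i \<or> t = pv i \<Longrightarrow> x \<notin> cs!i \<Longrightarrow> x \<notin> cs!t \<Longrightarrow> {i, t} \<in> Ed x"
    unfolding Ed_def nx_def pv_def using in_Ed[OF L3, where A="\<lambda>j. cs!j"] by blast
  have finS: "finite S" unfolding S_def by simp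
  have injou: "inj_on (\<lambda>i. {i, ou i}) S"
  proof (rule inj_onI)
    fix i j assume iS: "i \<in> S" and jS: "j \<in> S" and e: "{i, ou i} = {j, ou j}"
    show "i = j"
    proof (rule ccontr)
      assume ne: "i \<noteq> j"
      have ji: "j = ou i" using pair_inj[OF e ne] by (rule conjunct1)
      have ij: "i = ou j" using pair_inj[OF e ne] by (rule conjunct2)
      have d1: "Dor n k (cs!i) (cs!j)" using conjunct2[OF dirs[OF iS]] ji by simp
      have d2: "Dor n k (cs!j) (cs!i)" using conjunct2[OF dirs[OF jS]] ij by simp
      show False using asym[OF d1] d2 by simp
    qed
  qed
  have sub1: "(\<lambda>i. {i, ou i}) ` S \<subseteq> Ed 1"
  proof
    fix e assume "e \<in> (\<lambda>i. {i, ou i}) ` S"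
    then obtain i where iS: "i \<in> S" and e: "e = {i, ou i}" by blast
    have i: "i < L" using SL[OF iS] .
    have o: "ou i = nx i \<or> ou i = pv i" using oul[OF i] by simp
    have "{i, ou i} \<in> Ed 1" by (rule inEd[OF i o stp(1)[OF iS iS] stp(2)[OF iS iS]])
    then show "e \<in> Ed 1" using e by simp
  qed
  have "card S \<le> card (Ed 1)" by (rule card_inj_on_le[OF injou sub1 finEd])
  then show "card S \<le> miss cs 1" using cardEd by simp
  define S1 where "S1 = {i \<in> S. rk (cs!i) \<noteq> 2}"
  define S2 where "S2 = {i \<in> S. rk (cs!i) = 2}"
  have SU: "S = S1 \<union> S2" "S1 \<inter> S2 = {}" unfolding S1_def S2_def by auto
  have cS: "card S = card S1 + card S2"
    using SU card_Un_disjoint[of S1 S2] finS unfolding S1_def S2_def by simp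
  define g where "g i = (if rk (cs!i) = 1 then {i, ii i} else {i, ou i})" for i
  have rks1: "\<And>i. i \<in> S1 \<Longrightarrow> rk (cs!i) = 1 \<or> rk (cs!i) = 3"
  proof -
    fix i assume "i \<in> S1"
    then have iS: "i \<in> S" and r: "rk (cs!i) \<noteq> 2" unfolding S1_def by auto
    have "rk (cs!i) \<noteq> 0" using stp(3)[OF iS iS] .
    then show "rk (cs!i) = 1 \<or> rk (cs!i) = 3" using r rk_le[of "cs!i"] by linarith
  qed
  have S1S: "\<And>i. i \<in> S1 \<Longrightarrow> i \<in> S" unfolding S1_def by simp
  have gform: "\<And>j. \<exists>b. g j = {j, b}" unfolding g_def by auto
  have injg: "inj_on g S1"
  proof (rule inj_onI)
    fix i j assume iS: "i \<in> S1" and jS: "j \<in> S1" and e: "g i = g j"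
    show "i = j"
    proof (rule ccontr)
      assume ne: "i \<noteq> j"
      obtain a where ga: "g i = {i, a}" using gform by blast
      obtain b where gb: "g j = {j, b}" using gform by blast
      have eab: "{i, a} = {j, b}" using ga gb e by simp
      have ja: "j = a" using pair_inj[OF eab ne] by (rule conjunct1)
      have ib: "i = b" using pair_inj[OF eab ne] by (rule conjunct2)
      show False
      proof (cases "rk (cs!i) = 1")
        case True
        then have "g i = {i, ii i}" unfolding g_def by simp
        then have "a = ii i \<or> a = i" using ga by (auto simp: doubleton_eq_iff)
        then have "j = ii i" using ja ne by blast
        then have "rk (cs!j) = 0" using stp(4)[OF S1S[OF iS] S1S[OF iS] True] by simp
        then show False using stp(3)[OF S1S[OF jS] S1S[OF jS]] by simp
      next
        case F1: False
        show False
        proof (cases "rk (cs!j) = 1")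
          case True
          then have "g j = {j, ii j}" unfolding g_def by simp
          then have "b = ii j \<or> b = j" using gb by (auto simp: doubleton_eq_iff)
          then have "i = ii j" using ib ne by blast
          then have "rk (cs!i) = 0" using stp(4)[OF S1S[OF jS] S1S[OF jS] True] by simp
          then show False using stp(3)[OF S1S[OF iS] S1S[OF iS]] by simp
        next
          case False
          have "g i = {i, ou i}" using F1 unfolding g_def by simp
          then have "a = ou i \<or> a = i" using ga by (auto simp: doubleton_eq_iff)
          then have j2: "j = ou i" using ja ne by blast
          have "g j = {j, ou j}" using False unfolding g_def by simp
          then have "b = ou j \<or> b = j" using gb by (auto simp: doubleton_eq_iff)
          then have i2: "i = ou j" using ib ne by blast
          have d1: "Dor n k (cs!i) (cs!j)" using conjunct2[OF dirs[OF S1S[OF iS]]] j2 by simp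
          have d2: "Dor n k (cs!j) (cs!i)" using conjunct2[OF dirs[OF S1S[OF jS]]] i2 by simp
          show False using asym[OF d1] d2 by simp
        qed
      qed
    qed
  qed
  have subg: "g ` S1 \<subseteq> Ed 2"
  proof
    fix e assume "e \<in> g ` S1"
    then obtain i where iS1: "i \<in> S1" and e: "e = g i" by blast
    have iS: "i \<in> S" using S1S[OF iS1] .
    have i: "i < L" using SL[OF iS] .
    show "e \<in> Ed 2"
    proof (cases "rk (cs!i) = 1")
      case True
      have o: "ii i = nx i \<or> ii i = pv i" using iil[OF i] by simp
      have h: "2 \<notin> cs!(ii i) \<and> 2 \<notin> cs!i \<and> rk (cs!(ii i)) = 0" using stp(4)[OF iS iS True] .
      have "{i, ii i} \<in> Ed 2" by (rule inEd[OF i o]) (use h in simp_all)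
      then show ?thesis using e True unfolding g_def by simp
    next
      case False
      then have r3: "rk (cs!i) = 3" using rks1[OF iS1] by simp
      have o: "ou i = nx i \<or> ou i = pv i" using oul[OF i] by simp
      have h: "2 \<notin> cs!i \<and> 2 \<notin> cs!(ou i) \<and> rk (cs!(ou i)) = 3" using stp(5)[OF iS iS r3] .
      have "{i, ou i} \<in> Ed 2" by (rule inEd[OF i o]) (use h in simp_all)
      then show ?thesis using e False unfolding g_def by simp
    qed
  qed
  have c1: "card S1 \<le> miss cs 2"
    using card_inj_on_le[OF injg subg finEd] cardEd by simp
  have injou2: "inj_on (\<lambda>i. {i, ou i}) S2" using injou unfolding S2_def by (rule inj_on_subset) auto
  have sub3: "(\<lambda>i. {i, ou i}) ` S2 \<subseteq> Ed 3"
  proof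
    fix e assume "e \<in> (\<lambda>i. {i, ou i}) ` S2"
    then obtain i where iS2: "i \<in> S2" and e: "e = {i, ou i}" by blast
    have iS: "i \<in> S" and r2: "rk (cs!i) = 2" using iS2 unfolding S2_def by auto
    have i: "i < L" using SL[OF iS] .
    have o: "ou i = nx i \<or> ou i = pv i" using oul[OF i] by simp
    have h: "3 \<notin> cs!i \<and> 3 \<notin> cs!(ou i)" using stp(6)[OF iS iS r2] .
    have "{i, ou i} \<in> Ed 3" by (rule inEd[OF i o]) (use h in simp_all)
    then show "e \<in> Ed 3" using e by simp
  qed
  have c2: "card S2 \<le> miss cs 3" using card_inj_on_le[OF injou2 sub3 finEd] cardEd by simp
  show "card S \<le> miss cs 2 + miss cs 3" using cS c1 c2 by simp
  define \<sigma> where "\<sigma> i = Dor n k (cs!i) (cs!(nx i))" for i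
  have Siff: "\<And>i. i < L \<Longrightarrow> i \<in> S \<longleftrightarrow> (\<sigma> (pv i) \<longleftrightarrow> \<sigma> i)"
  proof -
    fix i assume i: "i < L"
    have a1: "Dor n k (cs!(pv i)) (cs!i) \<longleftrightarrow> \<sigma> (pv i)" unfolding \<sigma>_def using nxpv[OF i] by simp
    have a2: "Dor n k (cs!i) (cs!(pv i)) \<longleftrightarrow> \<not> \<sigma> (pv i)"
      using a1 tot[OF adjp[OF i]] asym by blast
    have b2: "Dor n k (cs!(nx i)) (cs!i) \<longleftrightarrow> \<not> \<sigma> i"
      unfolding \<sigma>_def using tot[OF adjn[OF i]] asym by blast
    have "i \<in> S \<longleftrightarrow> cycle_in_out (Dor n k) cs i" unfolding S_def L_def using i L_def by simp
    moreover have P4: "Dor n k (cs!i) (cs!(nx i)) \<longleftrightarrow> \<sigma> i" by (simp add: \<sigma>_def)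
    moreover have "cycle_in_out (Dor n k) cs i \<longleftrightarrow> (\<sigma> (pv i) \<or> \<not> \<sigma> i) \<and> (\<not> \<sigma> (pv i) \<or> \<sigma> i)"
      by (simp only: io[OF i] a1 a2 b2 P4)
    ultimately show "i \<in> S \<longleftrightarrow> (\<sigma> (pv i) \<longleftrightarrow> \<sigma> i)" by blast
  qed
  assume oddL: "odd (length cs)"
  define T where "T = {i. i < L \<and> \<sigma> (pv i) \<noteq> \<sigma> i}"
  have ST1: "S \<union> T = {..<L}"
  proof (rule set_eqI)
    fix i show "i \<in> S \<union> T \<longleftrightarrow> i \<in> {..<L}"
    proof (cases "i < L")
      case True then show ?thesis using Siff[OF True] unfolding T_def by auto
    next
      case False then show ?thesis using SL unfolding T_def by auto
    qed
  qed
  have ST2: "S \<inter> T = {}"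
  proof (rule equals0I)
    fix i assume h: "i \<in> S \<inter> T"
    then have i: "i < L" using SL by auto
    show False using h Siff[OF i] unfolding T_def by auto
  qed
  note ST = ST1 ST2
  have cST: "card S + card T = L" using card_Un_disjoint[of S T] ST finS unfolding T_def by simp
  have re: "(\<Sum>i<L. (of_bool (\<sigma> (pv i))::nat)) = (\<Sum>i<L. of_bool (\<sigma> i))"
  proof -
    have L0: "0 < L" using L3 by simp
    have "(\<Sum>i<L. (of_bool (\<sigma> (pv (nx i)))::nat)) = (\<Sum>i<L. of_bool (\<sigma> (pv i)))"
      using sum.reindex_bij_betw[OF nxt_bij[OF L0], of "\<lambda>i. (of_bool (\<sigma> (pv i))::nat)"]
      unfolding nx_def by simp
    moreover have "(\<Sum>i<L. (of_bool (\<sigma> (pv (nx i)))::nat)) = (\<Sum>i<L. of_bool (\<sigma> i))"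
      using pvnx by (intro sum.cong) auto
    ultimately show ?thesis by simp
  qed
  have pt: "\<And>i. (of_bool (\<sigma> (pv i) \<noteq> \<sigma> i) + 2 * of_bool (\<sigma> (pv i) \<and> \<sigma> i) :: nat)
     = of_bool (\<sigma> (pv i)) + of_bool (\<sigma> i)" by auto
  have "(\<Sum>i<L. (of_bool (\<sigma> (pv i) \<noteq> \<sigma> i)::nat)) + 2 * (\<Sum>i<L. of_bool (\<sigma> (pv i) \<and> \<sigma> i))
      = (\<Sum>i<L. (of_bool (\<sigma> (pv i))::nat)) + (\<Sum>i<L. of_bool (\<sigma> i))"
  proof -
    have "(\<Sum>i<L. (of_bool (\<sigma> (pv i) \<noteq> \<sigma> i) + 2 * of_bool (\<sigma> (pv i) \<and> \<sigma> i) :: nat))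
       = (\<Sum>i<L. (of_bool (\<sigma> (pv i)) + of_bool (\<sigma> i) :: nat))"
      by (rule sum.cong[OF refl]) (rule pt)
    then show ?thesis by (simp only: sum.distrib sum_distrib_left[symmetric])
  qed
  then have "(\<Sum>i<L. (of_bool (\<sigma> (pv i) \<noteq> \<sigma> i)::nat)) + 2 * (\<Sum>i<L. of_bool (\<sigma> (pv i) \<and> \<sigma> i))
      = 2 * (\<Sum>i<L. (of_bool (\<sigma> i)::nat))" using re by simp
  then have "even ((\<Sum>i<L. (of_bool (\<sigma> (pv i) \<noteq> \<sigma> i)::nat)) + 2 * (\<Sum>i<L. of_bool (\<sigma> (pv i) \<and> \<sigma> i)))"
    by simp
  then have ev: "even (\<Sum>i<L. (of_bool (\<sigma> (pv i) \<noteq> \<sigma> i)::nat))" by simp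
  have "card T = (\<Sum>i<L. (of_bool (\<sigma> (pv i) \<noteq> \<sigma> i)::nat))"
  proof -
    have "(\<Sum>i<L. (of_bool (\<sigma> (pv i) \<noteq> \<sigma> i)::nat)) = card ({..<L} \<inter> {i. \<sigma> (pv i) \<noteq> \<sigma> i})"
      by simp
    also have "{..<L} \<inter> {i. \<sigma> (pv i) \<noteq> \<sigma> i} = T" unfolding T_def by auto
    finally show ?thesis by simp
  qed
  then have "even (card T)" using ev by simp
  moreover have "odd (card S + card T)" using cST oddL L_def by simp
  ultimately show "odd (card S)" by simp
qed



lemma walk_cycle:
  fixes E :: "'a \<Rightarrow> 'a \<Rightarrow> bool"
  assumes irr: "\<And>v. \<not> E v v"
  shows "odd N \<Longrightarrow> (\<forall>i<N. E (w i) (w (Suc i))) \<Longrightarrow> w N = w 0 \<Longrightarrow>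
         \<exists>cs. is_cycle E cs \<and> odd (length cs) \<and> length cs \<le> N"
proof (induction N arbitrary: w rule: less_induct)
  case (less N)
  note oddN = less.prems(1) and st = less.prems(2) and cl = less.prems(3)
  show ?case
  proof (cases "inj_on w {..<N}")
    case True
    define cs where "cs = map w [0..<N]"
    have len: "length cs = N" unfolding cs_def by simp
    have N1: "N \<noteq> 1"
    proof
      assume "N = 1"
      then have "E (w 0) (w 1)" using st by simp
      then show False using cl \<open>N = 1\<close> irr by simp
    qed
    have N3: "3 \<le> N" using oddN N1 by presburger
    have dist: "distinct cs" unfolding cs_def using True by (simp add: distinct_map atLeast0LessThan)
    have adj: "\<forall>i < length cs. E (cs ! i) (cs ! ((i + 1) mod length cs))"
    proof (intro allI impI)
      fix i assume i: "i < length cs"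
      then have iN: "i < N" using len by simp
      show "E (cs ! i) (cs ! ((i + 1) mod length cs))"
      proof (cases "i + 1 < N")
        case True
        then show ?thesis using st iN unfolding cs_def by simp
      next
        case False
        then have "i + 1 = N" using iN by simp
        then have "(i + 1) mod length cs = 0" using len by simp
        moreover have "E (w i) (w N)" using st iN \<open>i + 1 = N\<close> by (metis Suc_eq_plus1)
        ultimately show ?thesis using cl iN N3 unfolding cs_def by simp
      qed
    qed
    have "is_cycle E cs" unfolding is_cycle_def using len N3 dist adj by simp
    then show ?thesis using len oddN by auto
  next
    case False
    then obtain a b where ab: "a < N" "b < N" "a \<noteq> b" "w a = w b"
      unfolding inj_on_def by auto
    obtain p q where pq: "p < q" "q < N" "w p = w q"
      using ab by (metis linorder_neqE_nat)
    define N1 where "N1 = q - p"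
    define w1 where "w1 i = w (p + i)" for i
    define N2 where "N2 = N - q + p"
    define w2 where "w2 i = (if i < N - q then w (q + i) else w (i - (N - q)))" for i
    have sumN: "N1 + N2 = N" unfolding N1_def N2_def using pq by simp
    have lt1: "N1 < N" and lt2: "N2 < N" unfolding N1_def N2_def using pq by auto
    have st1: "\<forall>i<N1. E (w1 i) (w1 (Suc i))"
      unfolding w1_def N1_def using st pq by auto
    have cl1: "w1 N1 = w1 0" unfolding w1_def N1_def using pq by simp
    have st2: "\<forall>i<N2. E (w2 i) (w2 (Suc i))"
    proof (intro allI impI)
      fix i assume i: "i < N2"
      show "E (w2 i) (w2 (Suc i))"
      proof (cases "Suc i < N - q")
        case True
        then have "w2 i = w (q + i)" "w2 (Suc i) = w (Suc (q + i))" unfolding w2_def by auto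
        moreover have "q + i < N" using True by simp
        ultimately show ?thesis using st by simp
      next
        case F: False
        show ?thesis
        proof (cases "Suc i = N - q")
          case True
          then have qi: "q + i = N - 1" using pq by simp
          have "w2 i = w (q + i)" unfolding w2_def using True by simp
          then have "w2 i = w (N - 1)" using qi by simp
          moreover have "w2 (Suc i) = w 0" unfolding w2_def using True by simp
          moreover have "E (w (N - 1)) (w (Suc (N - 1)))"
          proof -
            have "N - 1 < N" using pq by simp
            then show ?thesis using st by blast
          qed
          moreover have "Suc (N - 1) = N" using pq by simp
          ultimately show ?thesis using cl by metis
        next
          case False
          then have g: "N - q \<le> i" using F by simp
          then have "w2 i = w (i - (N - q))" "w2 (Suc i) = w (Suc (i - (N - q)))"
            unfolding w2_def using Suc_diff_le by auto
          moreover have "i - (N - q) < N" using i g pq unfolding N2_def by simp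
          ultimately show ?thesis using st by simp
        qed
      qed
    qed
    have cl2: "w2 N2 = w2 0"
    proof -
      have "\<not> (N2 < N - q)" "N2 - (N - q) = p" unfolding N2_def using pq by auto
      then have "w2 N2 = w p" unfolding w2_def by simp
      moreover have "w2 0 = w q" unfolding w2_def using pq by simp
      ultimately show ?thesis using pq by simp
    qed
    show ?thesis
    proof (cases "odd N1")
      case True
      then obtain cs where "is_cycle E cs" "odd (length cs)" "length cs \<le> N1"
        using less.IH[OF lt1 True st1 cl1] by blast
      then show ?thesis using lt1 by auto
    next
      case False
      then have "odd N2" using sumN oddN by presburger
      then obtain cs where "is_cycle E cs" "odd (length cs)" "length cs \<le> N2"
        using less.IH[OF lt2 _ st2 cl2] by blast
      then show ?thesis using lt2 by auto
    qed
  qed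
qed



definition sh :: "nat \<Rightarrow> nat \<Rightarrow> nat \<Rightarrow> nat" where
  "sh n s x = (if x + s \<le> n then x + s else x + s - n)"

lemma sh_range: "x \<in> {1..n} \<Longrightarrow> s \<le> n \<Longrightarrow> sh n s x \<in> {1..n}"
  unfolding sh_def by auto

lemma sh0: "x \<in> {1..n} \<Longrightarrow> sh n 0 x = x"
  unfolding sh_def by auto

lemma sh_inj: "s \<le> n \<Longrightarrow> inj_on (sh n s) {1..n}"
  unfolding sh_def inj_on_def by (auto split: if_splits)

lemma sh_suc: "x \<in> {1..n} \<Longrightarrow> s < n \<Longrightarrow> sh n 1 (sh n s x) = sh n (Suc s) x"
  unfolding sh_def by auto

lemma sh_comm: "x \<in> {1..n} \<Longrightarrow> s \<le> n \<Longrightarrow> sh n 1 (sh n s x) = sh n s (sh n 1 x)"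
  unfolding sh_def by auto

lemma stable_iff:
  assumes n: "2 \<le> n" and sub: "A \<subseteq> {1..n}"
  shows "stable_subset n A \<longleftrightarrow> (\<forall>x\<in>A. sh n 1 x \<notin> A)"
proof
  assume st: "stable_subset n A"
  show "\<forall>x\<in>A. sh n 1 x \<notin> A"
  proof
    fix x assume x: "x \<in> A"
    then have x1: "1 \<le> x" "x \<le> n" using sub by auto
    show "sh n 1 x \<notin> A"
    proof (cases "x < n")
      case True
      then have "sh n 1 x = Suc x" unfolding sh_def by simp
      then show ?thesis using st x x1 True unfolding stable_subset_def by auto
    next
      case False
      then have "x = n" using x1 by simp
      then have "sh n 1 x = 1" unfolding sh_def using n by simp
      then show ?thesis using st x \<open>x = n\<close> unfolding stable_subset_def by auto
    qed
  qed
next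
  assume h: "\<forall>x\<in>A. sh n 1 x \<notin> A"
  have a: "\<forall>i. 1 \<le> i \<and> i < n \<longrightarrow> \<not> (i \<in> A \<and> Suc i \<in> A)"
  proof (intro allI impI)
    fix i assume i: "1 \<le> i \<and> i < n"
    then have "sh n 1 i = Suc i" unfolding sh_def by simp
    then show "\<not> (i \<in> A \<and> Suc i \<in> A)" using h by metis
  qed
  have b: "\<not> (1 \<in> A \<and> n \<in> A)"
  proof
    assume "1 \<in> A \<and> n \<in> A"
    moreover have "sh n 1 n = 1" unfolding sh_def using n by simp
    ultimately show False using h by metis
  qed
  show "stable_subset n A" unfolding stable_subset_def using a b by blast
qed

lemma sh_vert:
  assumes A: "A \<in> SG_vertices n k" and n: "2 \<le> n" and s: "s \<le> n"
  shows "sh n s ` A \<in> SG_vertices n k"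
proof -
  have sub: "A \<subseteq> {1..n}" and c: "card A = k" and st: "stable_subset n A"
    using A unfolding SG_vertices_def by auto
  have inj: "inj_on (sh n s) A" using sh_inj[OF s] sub by (rule inj_on_subset)
  have sub2: "sh n s ` A \<subseteq> {1..n}" using sh_range[OF _ s] sub by auto
  have c2: "card (sh n s ` A) = k" using card_image[OF inj] c by simp
  have st1: "\<forall>x\<in>A. sh n 1 x \<notin> A" using stable_iff[OF n sub] st by simp
  have "\<forall>y\<in>sh n s ` A. sh n 1 y \<notin> sh n s ` A"
  proof
    fix y assume "y \<in> sh n s ` A"
    then obtain x where x: "x \<in> A" and y: "y = sh n s x" by blast
    have xr: "x \<in> {1..n}" using x sub by auto
    have e: "sh n 1 y = sh n s (sh n 1 x)" using sh_comm[OF xr s] y by simp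
    show "sh n 1 y \<notin> sh n s ` A"
    proof
      assume "sh n 1 y \<in> sh n s ` A"
      then obtain z where z: "z \<in> A" and ez: "sh n 1 y = sh n s z" by blast
      have r1: "sh n 1 x \<in> {1..n}" using sh_range[OF xr] n by simp
      have "sh n 1 x = z" using inj_onD[OF sh_inj[OF s] _ r1] e ez z sub by auto
      then show False using st1 x z by blast
    qed
  qed
  then have "stable_subset n (sh n s ` A)" using stable_iff[OF n sub2] by simp
  then show ?thesis unfolding SG_vertices_def using sub2 c2 by simp
qed

lemma sh_adj1:
  assumes B: "B \<in> SG_vertices n k" and n: "2 \<le> n"
  shows "SG_adj n k B (sh n 1 ` B)"
proof -
  have sub: "B \<subseteq> {1..n}" and st: "stable_subset n B" using B unfolding SG_vertices_def by auto
  have st1: "\<forall>x\<in>B. sh n 1 x \<notin> B" using stable_iff[OF n sub] st by simp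
  have "B \<inter> sh n 1 ` B = {}" using st1 by auto
  moreover have "sh n 1 ` B \<in> SG_vertices n k" using sh_vert[OF B n] n by simp
  ultimately show ?thesis unfolding SG_adj_def using B by simp
qed

lemma exists_cycle:
  assumes A0: "A0 \<in> SG_vertices n k" and n: "2 \<le> n" and k: "1 \<le> k" and oN: "odd N"
    and Nn: "N \<le> n" and sp: "A0 \<inter> sh n (N - 1) ` A0 = {}"
  shows "\<exists>cs. is_cycle (SG_adj n k) cs \<and> odd (length cs) \<and> length cs \<le> N"
proof -
  define w where "w i = sh n (i mod N) ` A0" for i
  have N0: "0 < N" using oN by presburger
  have sub: "A0 \<subseteq> {1..n}" using A0 unfolding SG_vertices_def by auto
  have irr: "\<And>v. \<not> SG_adj n k v v"
  proof
    fix v assume a: "SG_adj n k v v"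
    have "v \<inter> v = {}" using adj_props(5)[OF a k] .
    moreover have "v \<noteq> {}" using adj_props(2)[OF a k] .
    ultimately show False by simp
  qed
  have "sh n 0 ` A0 = (\<lambda>x. x) ` A0"
    by (rule image_cong[OF refl]) (use sub sh0 in blast)
  then have w0: "sh n 0 ` A0 = A0" by simp
  have st: "\<forall>i<N. SG_adj n k (w i) (w (Suc i))"
  proof (intro allI impI)
    fix i assume i: "i < N"
    have "i mod N < N" using N0 by simp
    then have "i mod N \<le> n" using Nn by simp
    then have V: "w i \<in> SG_vertices n k" unfolding w_def by (rule sh_vert[OF A0 n])
    have iN: "i < n" using i Nn by simp
    show "SG_adj n k (w i) (w (Suc i))"
    proof (cases "Suc i < N")
      case True
      have "w (Suc i) = sh n 1 ` (w i)"
      proof -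
        have "w (Suc i) = sh n (Suc i) ` A0" unfolding w_def using True by simp
        also have "\<dots> = sh n 1 ` (sh n i ` A0)"
          unfolding image_image
        proof (rule image_cong[OF refl])
          fix x assume "x \<in> A0"
          then have "x \<in> {1..n}" using sub by blast
          then show "sh n (Suc i) x = sh n 1 (sh n i x)" using sh_suc[OF _ iN] by simp
        qed
        also have "\<dots> = sh n 1 ` (w i)" unfolding w_def using i by simp
        finally show ?thesis .
      qed
      then show ?thesis using sh_adj1[OF V n] by simp
    next
      case False
      then have si: "Suc i = N" using i by simp
      have "w (Suc i) = A0" unfolding w_def using si w0 by simp
      moreover have "w i = sh n (N - 1) ` A0"
      proof -
        have "i mod N = N - 1" using si i by simp
        then show ?thesis unfolding w_def by simp
      qed
      moreover have "w i \<inter> A0 = {}" using sp \<open>w i = sh n (N - 1) ` A0\<close> by blast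
      ultimately show ?thesis using V A0 unfolding SG_adj_def by simp
    qed
  qed
  have cl: "w N = w 0" unfolding w_def by simp
  show ?thesis using walk_cycle[of "SG_adj n k" N w, OF irr oN st cl] .
qed



lemma even_case_cycle:
  fixes j q n k :: nat
  assumes jq: "q \<le> j" "j \<le> q + 1" and j1: "1 \<le> j" and nd: "n = 2*j + 2*q + 2" and kd: "k = j + q"
  shows "\<exists>cs. is_cycle (SG_adj n k) cs \<and> odd (length cs) \<and> length cs \<le> 2*j + 1"
proof -
  define A0 where "A0 = (\<lambda>t. 2*t+1) ` {..<j} \<union> (\<lambda>t. 2*t+2*j+2) ` {..<q}"
  have mem: "\<And>x. x \<in> A0 \<longleftrightarrow> (\<exists>t<j. x = 2*t+1) \<or> (\<exists>t<q. x = 2*t+2*j+2)"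
    unfolding A0_def by auto
  have sub: "A0 \<subseteq> {1..n}"
  proof
    fix x assume "x \<in> A0"
    then have "(\<exists>t<j. x = 2*t+1) \<or> (\<exists>t<q. x = 2*t+2*j+2)" using mem by blast
    then show "x \<in> {1..n}" using nd jq by auto
  qed
  have c: "card A0 = k"
  proof -
    have i1: "inj_on (\<lambda>t::nat. 2*t+1) {..<j}" by (rule inj_onI) simp
    have i2: "inj_on (\<lambda>t::nat. 2*t+2*j+2) {..<q}" by (rule inj_onI) simp
    have d: "(\<lambda>t. 2*t+1) ` {..<j} \<inter> (\<lambda>t. 2*t+2*j+2) ` {..<q} = {}"
    proof (rule equals0I)
      fix z assume "z \<in> (\<lambda>t. 2*t+1) ` {..<j} \<inter> (\<lambda>t. 2*t+2*j+2) ` {..<q}"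
      then obtain a b where "z = 2*a+1" "z = 2*b+2*j+2" by auto
      then show False by presburger
    qed
    have "card A0 = card ((\<lambda>t. 2*t+1) ` {..<j}) + card ((\<lambda>t. 2*t+2*j+2) ` {..<q})"
      unfolding A0_def by (rule card_Un_disjoint[OF _ _ d]) simp_all
    then show ?thesis using card_image[OF i1] card_image[OF i2] kd by simp
  qed
  have n2: "2 \<le> n" using nd by simp
  have st: "\<forall>x\<in>A0. sh n 1 x \<notin> A0"
  proof
    fix x assume x: "x \<in> A0"
    then have h: "(\<exists>t<j. x = 2*t+1) \<or> (\<exists>t<q. x = 2*t+2*j+2)" using mem by blast
    have "x < n" using h nd jq by auto
    then have "sh n 1 x = x + 1" unfolding sh_def by simp
    moreover have "\<not> ((\<exists>t<j. x + 1 = 2*t+1) \<or> (\<exists>t<q. x + 1 = 2*t+2*j+2))"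
    proof
      assume h2: "(\<exists>t<j. x + 1 = 2*t+1) \<or> (\<exists>t<q. x + 1 = 2*t+2*j+2)"
      show False using h
      proof (elim disjE exE conjE)
        fix t assume t: "t < j" "x = 2*t+1"
        show False using h2
        proof (elim disjE exE conjE)
          fix u assume "u < j" "x + 1 = 2*u+1" then show False using t by presburger
        next
          fix u assume "u < q" "x + 1 = 2*u+2*j+2" then show False using t by linarith
        qed
      next
        fix t assume t: "t < q" "x = 2*t+2*j+2"
        show False using h2
        proof (elim disjE exE conjE)
          fix u assume "u < j" "x + 1 = 2*u+1" then show False using t by linarith
        next
          fix u assume "u < q" "x + 1 = 2*u+2*j+2" then show False using t by presburger
        qed
      qed
    qed
    ultimately show "sh n 1 x \<notin> A0" using mem by simp
  qed
  have V: "A0 \<in> SG_vertices n k"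
    unfolding SG_vertices_def using sub c stable_iff[OF n2 sub] st by simp
  have sp: "A0 \<inter> sh n (2*j+1 - 1) ` A0 = {}"
  proof (rule equals0I)
    fix y assume y: "y \<in> A0 \<inter> sh n (2*j+1 - 1) ` A0"
    then obtain x where x: "x \<in> A0" and yx: "y = sh n (2*j) x" by auto
    have hx: "(\<exists>t<j. x = 2*t+1) \<or> (\<exists>t<q. x = 2*t+2*j+2)" using x mem by blast
    have hy: "(\<exists>t<j. y = 2*t+1) \<or> (\<exists>t<q. y = 2*t+2*j+2)" using y mem by blast
    have ys: "y = (if x + 2*j \<le> n then x + 2*j else x + 2*j - n)" using yx unfolding sh_def by simp
    have nb: "4*j \<le> n" "n \<le> 4*j+2" using nd jq by auto
    show False using hx
    proof (elim disjE exE conjE)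
      fix t assume t: "t < j" "x = 2*t+1"
      then have "x + 2*j \<le> n" using nb by linarith
      then have yv: "y = 2*t+2*j+1" using ys t by simp
      show False using hy
      proof (elim disjE exE conjE)
        fix u assume "u < j" "y = 2*u+1" then show False using yv t by linarith
      next
        fix u assume "u < q" "y = 2*u+2*j+2" then show False using yv by presburger
      qed
    next
      fix t assume t: "t < q" "x = 2*t+2*j+2"
      show False
      proof (cases "x + 2*j \<le> n")
        case True
        then have yv: "y = n" using ys t nb by simp
        show False using hy
        proof (elim disjE exE conjE)
          fix u assume "u < j" "y = 2*u+1" then show False using yv nd by presburger
        next
          fix u assume "u < q" "y = 2*u+2*j+2" then show False using yv nd by linarith
        qed
      next
        case False
        then have yv: "y = x + 2*j - n" using ys by simp
        then have yv2: "y + n = 2*t + 4*j + 2" using t False by simp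
        show False using hy
        proof (elim disjE exE conjE)
          fix u assume "u < j" "y = 2*u+1" then show False using yv2 nd by presburger
        next
          fix u assume "u < q" "y = 2*u+2*j+2" then show False using yv2 nd t jq by linarith
        qed
      qed
    qed
  qed
  have "odd (2*j+1)" by simp
  moreover have "2*j+1 \<le> n" using nd by simp
  moreover have "1 \<le> k" using kd j1 by simp
  ultimately show ?thesis using exists_cycle[OF V n2] sp by blast
qed

lemma odd_case_cycle:
  fixes n k :: nat
  assumes k: "1 \<le> k" and nd: "n = 2*k + 1"
  shows "\<exists>cs. is_cycle (SG_adj n k) cs \<and> odd (length cs) \<and> length cs \<le> n"
proof -
  define A0 where "A0 = (\<lambda>t. 2*t+1) ` {..<k}"
  have mem: "\<And>x. x \<in> A0 \<longleftrightarrow> (\<exists>t<k. x = 2*t+1)"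
    unfolding A0_def by auto
  have sub: "A0 \<subseteq> {1..n}"
  proof
    fix x assume "x \<in> A0"
    then have "\<exists>t<k. x = 2*t+1" using mem by blast
    then show "x \<in> {1..n}" using nd by auto
  qed
  have c: "card A0 = k"
  proof -
    have i1: "inj_on (\<lambda>t::nat. 2*t+1) {..<k}" by (rule inj_onI) simp
    show ?thesis using card_image[OF i1] unfolding A0_def by simp
  qed
  have n2: "2 \<le> n" using nd k by simp
  have st: "\<forall>x\<in>A0. sh n 1 x \<notin> A0"
  proof
    fix x assume x: "x \<in> A0"
    then have h: "\<exists>t<k. x = 2*t+1" using mem by blast
    have "x < n" using h nd by auto
    then have "sh n 1 x = x + 1" unfolding sh_def by simp
    moreover have "\<not> (\<exists>t<k. x + 1 = 2*t+1)"
    proof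
      assume "\<exists>t<k. x + 1 = 2*t+1"
      then obtain u where "x + 1 = 2*u+1" by blast
      moreover obtain t where "x = 2*t+1" using h by blast
      ultimately show False by presburger
    qed
    ultimately show "sh n 1 x \<notin> A0" using mem by simp
  qed
  have V: "A0 \<in> SG_vertices n k"
    unfolding SG_vertices_def using sub c stable_iff[OF n2 sub] st by simp
  have sp: "A0 \<inter> sh n (n - 1) ` A0 = {}"
  proof (rule equals0I)
    fix y assume y: "y \<in> A0 \<inter> sh n (n - 1) ` A0"
    then obtain x where x: "x \<in> A0" and yx: "y = sh n (n - 1) x" by auto
    have hx: "\<exists>t<k. x = 2*t+1" using x mem by blast
    have hy: "\<exists>t<k. y = 2*t+1" using y mem by blast
    have ys: "y = (if x + (n - 1) \<le> n then x + (n - 1) else x + (n - 1) - n)" using yx unfolding sh_def by simp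
    obtain t where t: "t < k" "x = 2*t+1" using hx by blast
    obtain u where u: "u < k" "y = 2*u+1" using hy by blast
    show False
    proof (cases "t = 0")
      case True
      then have "y = n" using ys t nd by simp
      then show False using u nd by linarith
    next
      case False
      then have "y = 2*t" using ys t nd by simp
      then show False using u by presburger
    qed
  qed
  have "odd n" using nd by simp
  then show ?thesis using exists_cycle[OF V n2 k _ _ sp] by simp
qed



lemma sum_two_big:
  fixes m :: "nat \<Rightarrow> nat"
  assumes all: "\<forall>z\<in>{1..n}. 1 \<le> m z" and x: "x \<in> {1..n}" and y: "y \<in> {1..n}" and xy: "x \<noteq> y"
    and mx: "3 \<le> m x" and my: "3 \<le> m y"
  shows "n + 4 \<le> (\<Sum>z\<in>{1..n}. m z)"
proof -
  define R where "R = {1..n} - {x} - {y}"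
  have f: "finite R" unfolding R_def by simp
  have cR: "card R = n - 2" unfolding R_def using x y xy by simp
  have s1: "(\<Sum>z\<in>{1..n}. m z) = m x + (\<Sum>z\<in>{1..n} - {x}. m z)"
    using x by (simp add: sum.remove)
  have s2: "(\<Sum>z\<in>{1..n} - {x}. m z) = m y + (\<Sum>z\<in>R. m z)"
    unfolding R_def using y xy by (simp add: sum.remove)
  have "(\<Sum>z\<in>R. (1::nat)) \<le> (\<Sum>z\<in>R. m z)"
    by (rule sum_mono) (use all in \<open>auto simp: R_def\<close>)
  then have "n - 2 \<le> (\<Sum>z\<in>R. m z)" using cR by simp
  moreover have "2 \<le> n" using x y xy by auto
  ultimately show ?thesis using s1 s2 mx my by linarith
qed

lemma sum_lower:
  fixes m :: "nat \<Rightarrow> nat"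
  assumes all: "\<forall>z\<in>{1..n}. 1 \<le> m z"
  shows "n \<le> (\<Sum>z\<in>{1..n}. m z)"
proof -
  have "(\<Sum>z\<in>{1..n}. (1::nat)) \<le> (\<Sum>z\<in>{1..n}. m z)" by (rule sum_mono) (use all in auto)
  then show ?thesis by simp
qed

theorem mainTheorem15:
  fixes n k :: nat
  assumes "1 \<le> k" and "2 * k \<le> n" and "n \<le> 2 * k + 2"
  shows "\<exists>D. is_orientation (SG_adj n k) D \<and>
           (\<forall>cs. shortest_odd_cycle (SG_adj n k) cs \<longrightarrow> alternating D cs)"
proof (intro exI conjI allI impI)
  note k = assms(1)
  show "is_orientation (SG_adj n k) (Dor n k)" using orient[OF k] .
  fix cs assume sh: "shortest_odd_cycle (SG_adj n k) cs"
  have cyc: "is_cycle (SG_adj n k) cs" and oL: "odd (length cs)"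
    and mini: "\<And>cs'. is_cycle (SG_adj n k) cs' \<Longrightarrow> odd (length cs') \<Longrightarrow> length cs \<le> length cs'"
    using sh unfolding shortest_odd_cycle_def by auto
  define L where "L = length cs"
  have m1: "\<forall>z\<in>{1..n}. 1 \<le> miss cs z"
  proof
    fix z assume "z \<in> {1..n}"
    have "odd (miss cs z)" using miss_odd[OF cyc k oL] .
    then show "1 \<le> miss cs z" by (cases "miss cs z") auto
  qed
  have sm: "(\<Sum>x\<in>{1..n}. miss cs x) + 2 * (L * k) = n * L" using sum_miss[OF cyc k] L_def by simp
  have lo: "n \<le> (\<Sum>x\<in>{1..n}. miss cs x)" using sum_lower[OF m1] .
  have n2k: "2 * k < n"
  proof (rule ccontr)
    assume "\<not> 2 * k < n"
    then have "n = 2 * k" using assms(2) by simp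
    then have "(\<Sum>x\<in>{1..n}. miss cs x) = 0" using sm by (simp add: algebra_simps)
    then show False using lo k \<open>n = 2 * k\<close> by simp
  qed
  have n3: "3 \<le> n" using n2k k by simp
  have ub: "L * (n - 2 * k) \<le> n + 2"
  proof -
    obtain N0 where N0: "N0 * (n - 2 * k) \<le> n + 2"
      and ex: "\<exists>cs'. is_cycle (SG_adj n k) cs' \<and> odd (length cs') \<and> length cs' \<le> N0"
    proof (cases "n = 2 * k + 1")
      case True
      have a: "n * (n - 2 * k) \<le> n + 2" using True by simp
      show ?thesis by (rule that[OF a odd_case_cycle[OF k True]])
    next
      case False
      then have nn: "n = 2 * k + 2" using n2k assms(3) by simp
      show ?thesis
      proof (cases "even k")
        case True
        then obtain j where j: "k = 2 * j" by blast
        have ex: "\<exists>cs. is_cycle (SG_adj n k) cs \<and> odd (length cs) \<and> length cs \<le> 2*j + 1"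
          by (rule even_case_cycle[of j j]) (use j k nn in simp_all)
        have a: "(2*j+1) * (n - 2 * k) \<le> n + 2" using j nn by simp
        show ?thesis by (rule that[OF a ex])
      next
        case False
        then obtain j where j: "k = 2 * j + 1" by (rule oddE)
        have ex: "\<exists>cs. is_cycle (SG_adj n k) cs \<and> odd (length cs) \<and> length cs \<le> 2*(j+1) + 1"
          by (rule even_case_cycle[of j "j+1"]) (use j nn in simp_all)
        have a: "(2*(j+1)+1) * (n - 2 * k) \<le> n + 2" using j nn by simp
        show ?thesis by (rule that[OF a ex])
      qed
    qed
    obtain cs' where c': "is_cycle (SG_adj n k) cs'" "odd (length cs')" "length cs' \<le> N0" using ex by blast
    have "L \<le> N0" using mini[OF c'(1,2)] c'(3) L_def by simp
    then have m: "L * (n - 2 * k) \<le> N0 * (n - 2 * k)" by (rule mult_right_mono) simp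
    show ?thesis using m N0 by (rule le_trans)
  qed
  have "n * L = L * (n - 2 * k) + 2 * (L * k)" using n2k by (simp add: algebra_simps diff_mult_distrib2)
  then have up: "(\<Sum>x\<in>{1..n}. miss cs x) \<le> n + 2" using sm ub by linarith
  have no2: "\<And>x y. x \<in> {1..n} \<Longrightarrow> y \<in> {1..n} \<Longrightarrow> x \<noteq> y \<Longrightarrow> 3 \<le> miss cs x \<Longrightarrow> 3 \<le> miss cs y \<Longrightarrow> False"
  proof -
    fix x y assume "x \<in> {1..n}" "y \<in> {1..n}" "x \<noteq> y" "3 \<le> miss cs x" "3 \<le> miss cs y"
    then have "n + 4 \<le> (\<Sum>z\<in>{1..n}. miss cs z)" using sum_two_big[OF m1] by blast
    then show False using up by simp
  qed
  have small: "\<And>x. x \<in> {1..n} \<Longrightarrow> miss cs x < 3 \<Longrightarrow> miss cs x = 1"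
  proof -
    fix x assume x: "x \<in> {1..n}" "miss cs x < 3"
    have "odd (miss cs x)" using miss_odd[OF cyc k oL] .
    moreover have "1 \<le> miss cs x" using m1 x by blast
    ultimately show "miss cs x = 1" using x(2) by presburger
  qed
  define S where "S = {i. i < length cs \<and> cycle_in_out (Dor n k) cs i}"
  have b1: "card S \<le> miss cs 1" and b2: "card S \<le> miss cs 2 + miss cs 3" and oS: "odd (card S)"
    using inout_bounds[OF cyc k n3] oL unfolding S_def by auto
  have r1: "1 \<in> {1..n}" and r2: "2 \<in> {1..n}" and r3: "3 \<in> {1..n}" using n3 by auto
  have "card S \<le> 1"
  proof (cases "miss cs 1 < 3")
    case True
    then show ?thesis using small[OF r1] b1 by simp
  next
    case False
    then have "\<not> 3 \<le> miss cs 2" "\<not> 3 \<le> miss cs 3" using no2[OF r1 r2] no2[OF r1 r3] by auto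
    then have "miss cs 2 = 1" "miss cs 3 = 1" using small[OF r2] small[OF r3] by auto
    then have "card S \<le> 2" using b2 by simp
    then show ?thesis using oS by presburger
  qed
  then show "alternating (Dor n k) cs" unfolding alternating_def S_def .
qed

end
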